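(* For every $[0,1]_{\text{Ł}}$-Kripke model $\mathfrak{M}=\langle W_{\mathfrak{M}},R_{\mathfrak{M}},e_{\mathfrak{M}}\rangle$ there exist a witnessed $[0,1]_{\text{Ł}}$-Kripke model $\mathfrak{N}=\langle W_{\mathfrak{N}},R_{\mathfrak{N}},e_{\mathfrak{N}}\rangle$ and a map $h\colon W_{\mathfrak{M}}\to W_{\mathfrak{N}}$ such that $e_{\mathfrak{M}}(v,\varphi)=e_{\mathfrak{N}}(h(v),\varphi)$ for every modal formula $\varphi$ and every $v\in W_{\mathfrak{M}}$.
   Context: $[0,1]_{\text{Ł}}$ is the standard MV-algebra on $[0,1]$ with $\wedge=\min$, $\vee=\max$, $a\cdot b=\max\{0,a+b-1\}$, $a\to b=\min\{1,1-a+b\}$, constants $0,1$. Modal formulas are built from propositional variables with $\wedge,\vee,\cdot,\to,0,1,\Box,\Diamond$. A $[0,1]_{\text{Ł}}$-Kripke model is $\langle W,R,e\rangle$ with $W\neq\emptyset$, $R\subseteq W\times W$ (crisp), $e$ assigning a value in $[0,1]$ to each variable at each world, extended world-wise homomorphically and by $e(v,\Box\varphi)=\inf_{Rvw}e(w,\varphi)$, $e(v,\Diamond\varphi)=\sup_{Rvw}e(w,\varphi)$ (with $\inf\emptyset=1$, $\sup\emptyset=0$). The model is witnessed if for every formula $\mathtt{M}\varphi$ with $\mathtt{M}\in\{\Box,\Diamond\}$ and every $v\in W$ there is $w$ with $Rvw$ and $e(v,\mathtt{M}\varphi)=e(w,\varphi)$. *)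

theory Defs
  imports Complex_Main
begin

datatype 'v fm =
    Var 'v
  | Zero
  | One
  | Meet "'v fm" "'v fm"
  | Join "'v fm" "'v fm"
  | Prod "'v fm" "'v fm"
  | Imp  "'v fm" "'v fm"
  | Box  "'v fm"
  | Dia  "'v fm"

definition kripke_model :: "'w set \<Rightarrow> ('w \<times> 'w) set \<Rightarrow> ('w \<Rightarrow> 'v \<Rightarrow> real) \<Rightarrow> bool" where
  "kripke_model W R e \<longleftrightarrow> W \<noteq> {} \<and> R \<subseteq> W \<times> W \<and>
     (\<forall>w\<in>W. \<forall>p. 0 \<le> e w p \<and> e w p \<le> 1)"

fun ev :: "('w \<times> 'w) set \<Rightarrow> ('w \<Rightarrow> 'v \<Rightarrow> real) \<Rightarrow> 'w \<Rightarrow> 'v fm \<Rightarrow> real" where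
  "ev R e w (Var p) = e w p"
| "ev R e w Zero = 0"
| "ev R e w One = 1"
| "ev R e w (Meet a b) = min (ev R e w a) (ev R e w b)"
| "ev R e w (Join a b) = max (ev R e w a) (ev R e w b)"
| "ev R e w (Prod a b) = max 0 (ev R e w a + ev R e w b - 1)"
| "ev R e w (Imp a b) = min 1 (1 - ev R e w a + ev R e w b)"
| "ev R e w (Box a) =
     (if {u. (w, u) \<in> R} = {} then 1 else (INF u\<in>{u. (w, u) \<in> R}. ev R e u a))"
| "ev R e w (Dia a) =
     (if {u. (w, u) \<in> R} = {} then 0 else (SUP u\<in>{u. (w, u) \<in> R}. ev R e u a))"

definition witnessed :: "'w set \<Rightarrow> ('w \<times> 'w) set \<Rightarrow> ('w \<Rightarrow> 'v \<Rightarrow> real) \<Rightarrow> bool" where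
  "witnessed W R e \<longleftrightarrow>
     (\<forall>v\<in>W. \<forall>\<phi>. {u. (v, u) \<in> R} \<noteq> {} \<longrightarrow>
        (\<exists>u. (v, u) \<in> R \<and> ev R e v (Box \<phi>) = ev R e u \<phi>) \<and>
        (\<exists>u. (v, u) \<in> R \<and> ev R e v (Dia \<phi>) = ev R e u \<phi>))"

end

theory Submission imports Defs begin
lemma ex_free_ultra:
  "\<exists>U::nat filter. U \<noteq> bot \<and> (\<forall>P. eventually P U \<or> eventually (\<lambda>n. \<not> P n) U) \<and> U \<le> sequentially"
proof -
  define A :: "nat set set set" where "A = {M. (\<forall>X Y. X\<in>M \<longrightarrow> X \<subseteq> Y \<longrightarrow> Y\<in>M) \<and> (\<forall>X\<in>M. \<forall>Y\<in>M. X\<inter>Y\<in>M) \<and> {}\<notin>M \<and> (\<forall>k. {k..}\<in>M)}"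
  define C0 :: "nat set set" where "C0 = {X. \<exists>k. {k..} \<subseteq> X}"
  have C0A: "C0 \<in> A"
  proof -
    have "X \<inter> Y \<in> C0" if h: "X \<in> C0" "Y \<in> C0" for X Y
    proof -
      obtain k1 k2 where "{k1..} \<subseteq> X" "{k2..} \<subseteq> Y" using h unfolding C0_def by auto
      then have "{max k1 k2..} \<subseteq> X \<inter> Y" by auto
      then show ?thesis unfolding C0_def by blast
    qed
    moreover have "{} \<notin> C0" unfolding C0_def by auto
    ultimately show ?thesis unfolding A_def C0_def by blast
  qed
  have "\<forall>C\<in>chains A. \<exists>U\<in>A. \<forall>X\<in>C. X \<subseteq> U"
  proof
    fix C assume C: "C \<in> chains A"
    show "\<exists>U\<in>A. \<forall>X\<in>C. X \<subseteq> U"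
    proof (cases "C = {}")
      case True then show ?thesis using C0A by auto
    next
      case False
      have sub: "C \<subseteq> A" and ch: "\<forall>x\<in>C. \<forall>y\<in>C. x \<subseteq> y \<or> y \<subseteq> x"
        using C unfolding chains_def chain_subset_def by auto
      have "\<Union>C \<in> A"
      proof -
        have 1: "\<forall>X Y. X\<in>\<Union>C \<longrightarrow> X \<subseteq> Y \<longrightarrow> Y\<in>\<Union>C" using sub unfolding A_def by blast
        have 2: "\<forall>X\<in>\<Union>C. \<forall>Y\<in>\<Union>C. X\<inter>Y\<in>\<Union>C"
        proof (intro ballI)
          fix X Y assume "X \<in> \<Union>C" "Y \<in> \<Union>C"
          then obtain M1 M2 where "M1 \<in> C" "M2 \<in> C" "X \<in> M1" "Y \<in> M2" by auto
          with ch have "(X \<in> M1 \<and> Y \<in> M1 \<and> M1 \<in> C) \<or> (X \<in> M2 \<and> Y \<in> M2 \<and> M2 \<in> C)" by blast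
          then show "X\<inter>Y\<in>\<Union>C" using sub unfolding A_def by blast
        qed
        have 3: "{} \<notin> \<Union>C" using sub unfolding A_def by blast
        have 4: "\<forall>k. {k..}\<in>\<Union>C" using sub False unfolding A_def by blast
        show ?thesis using 1 2 3 4 unfolding A_def by blast
      qed
      then show ?thesis by blast
    qed
  qed
  from Zorn_Lemma2[OF this] obtain M where MA: "M \<in> A" and max: "\<forall>X\<in>A. M \<subseteq> X \<longrightarrow> X = M" by blast
  have up: "\<And>X Y. X\<in>M \<Longrightarrow> X \<subseteq> Y \<Longrightarrow> Y\<in>M" and int: "\<And>X Y. X\<in>M \<Longrightarrow> Y\<in>M \<Longrightarrow> X\<inter>Y\<in>M"
    and ne: "{} \<notin> M" and cof: "\<And>k. {k..}\<in>M" using MA unfolding A_def by blast+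
  have ultra: "S \<in> M \<or> - S \<in> M" for S
  proof (rule ccontr)
    assume nS: "\<not> (S \<in> M \<or> - S \<in> M)"
    have disj: "X \<inter> S \<noteq> {}" if "X \<in> M" for X
    proof
      assume "X \<inter> S = {}" then have "X \<subseteq> - S" by auto
      then show False using up that nS by blast
    qed
    define M' where "M' = {Y. \<exists>X\<in>M. X \<inter> S \<subseteq> Y}"
    have "M' \<in> A"
    proof -
      have 1: "\<forall>X Y. X\<in>M' \<longrightarrow> X \<subseteq> Y \<longrightarrow> Y\<in>M'" unfolding M'_def by blast
      have 2: "\<forall>X\<in>M'. \<forall>Y\<in>M'. X\<inter>Y\<in>M'"
      proof (intro ballI)
        fix X Y assume "X \<in> M'" "Y \<in> M'"
        then obtain X1 Y1 where "X1 \<in> M" "Y1 \<in> M" "X1 \<inter> S \<subseteq> X" "Y1 \<inter> S \<subseteq> Y" unfolding M'_def by auto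
        then have "X1 \<inter> Y1 \<in> M" "(X1 \<inter> Y1) \<inter> S \<subseteq> X \<inter> Y" using int by auto
        then show "X \<inter> Y \<in> M'" unfolding M'_def by blast
      qed
      have 3: "{} \<notin> M'" unfolding M'_def using disj by blast
      have 4: "\<forall>k. {k..}\<in>M'" unfolding M'_def using cof by blast
      show ?thesis using 1 2 3 4 unfolding A_def by blast
    qed
    moreover have "M \<subseteq> M'" unfolding M'_def by blast
    ultimately have "M' = M" using max by blast
    moreover have "S \<in> M'" unfolding M'_def using cof by blast
    ultimately show False using nS by blast
  qed
  have isf: "is_filter (\<lambda>P. {n. P n} \<in> M)"
  proof
    show "{n. True} \<in> M" using up[OF cof[of 0]] by auto
  next
    fix P Q assume "{n. P n} \<in> M" "{n. Q n} \<in> M"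
    from int[OF this] show "{n. P n \<and> Q n} \<in> M" by (simp add: Collect_conj_eq)
  next
    fix P Q assume "\<forall>x. P x \<longrightarrow> Q x" "{n. P n} \<in> M"
    then show "{n. Q n} \<in> M" using up by blast
  qed
  define U where "U = Abs_filter (\<lambda>P. {n. P n} \<in> M)"
  have evU: "eventually P U \<longleftrightarrow> {n. P n} \<in> M" for P
    unfolding U_def by (rule eventually_Abs_filter[OF isf])
  have "U \<noteq> bot"
  proof
    assume "U = bot" then have "eventually (\<lambda>n. False) U" by simp
    then show False using ne evU by simp
  qed
  moreover have "\<forall>P. eventually P U \<or> eventually (\<lambda>n. \<not> P n) U"
  proof
    fix P show "eventually P U \<or> eventually (\<lambda>n. \<not> P n) U"
      using ultra[of "{n. P n}"] unfolding evU by (simp add: Collect_neg_eq)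
  qed
  moreover have "U \<le> sequentially"
    unfolding le_filter_def eventually_sequentially evU
  proof (intro allI impI)
    fix P :: "nat \<Rightarrow> bool" assume "\<exists>N. \<forall>n\<ge>N. P n"
    then obtain N where "\<forall>n\<ge>N. P n" by blast
    then have "{N..} \<subseteq> {n. P n}" by auto
    then show "{n. P n} \<in> M" using up cof by blast
  qed
  ultimately show ?thesis by blast
qed

lemma ev_range:
  assumes "kripke_model W R e" "w \<in> W"
  shows "0 \<le> ev R e w \<phi> \<and> ev R e w \<phi> \<le> 1"
  using assms(2)
proof (induction \<phi> arbitrary: w)
  case (Var x) then show ?case using assms(1) unfolding kripke_model_def by auto
next
  case (Box \<phi>)
  have RW: "\<And>u. (w, u) \<in> R \<Longrightarrow> u \<in> W" using assms(1) unfolding kripke_model_def by auto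
  show ?case
  proof (cases "{u. (w, u) \<in> R} = {}")
    case True then show ?thesis by simp
  next
    case False
    then obtain u0 where u0: "(w,u0) \<in> R" by auto
    have bb: "bdd_below ((\<lambda>u. ev R e u \<phi>) ` {u. (w, u) \<in> R})"
      using Box.IH RW by (intro bdd_belowI[of _ 0]) auto
    have "0 \<le> (INF u\<in>{u. (w, u) \<in> R}. ev R e u \<phi>)"
      using False Box.IH RW by (intro cINF_greatest) auto
    moreover have "(INF u\<in>{u. (w, u) \<in> R}. ev R e u \<phi>) \<le> ev R e u0 \<phi>"
      using bb u0 by (intro cINF_lower) auto
    ultimately show ?thesis using False Box.IH[of u0] RW[OF u0] by simp
  qed
next
  case (Dia \<phi>)
  have RW: "\<And>u. (w, u) \<in> R \<Longrightarrow> u \<in> W" using assms(1) unfolding kripke_model_def by auto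
  show ?case
  proof (cases "{u. (w, u) \<in> R} = {}")
    case True then show ?thesis by simp
  next
    case False
    then obtain u0 where u0: "(w,u0) \<in> R" by auto
    have bb: "bdd_above ((\<lambda>u. ev R e u \<phi>) ` {u. (w, u) \<in> R})"
      using Dia.IH RW by (intro bdd_aboveI[of _ 1]) auto
    have "(SUP u\<in>{u. (w, u) \<in> R}. ev R e u \<phi>) \<le> 1"
      using False Dia.IH RW by (intro cSUP_least) auto
    moreover have "ev R e u0 \<phi> \<le> (SUP u\<in>{u. (w, u) \<in> R}. ev R e u \<phi>)"
      using bb u0 by (intro cSUP_upper) auto
    ultimately show ?thesis using False Dia.IH[of u0] RW[OF u0] by simp
  qed
qed (auto simp: min_def max_def; smt (verit))+

locale ultra_setup =
  fixes U :: "nat filter" and W :: "'w set" and R :: "('w \<times> 'w) set" and e :: "'w \<Rightarrow> 'v \<Rightarrow> real"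
    and Wp :: "(nat \<Rightarrow> 'w) set" and Rp :: "((nat \<Rightarrow> 'w) \<times> (nat \<Rightarrow> 'w)) set"
    and ep :: "(nat \<Rightarrow> 'w) \<Rightarrow> 'v \<Rightarrow> real"
  assumes U_nbot: "U \<noteq> bot"
    and U_ultra: "\<And>P. eventually P U \<or> eventually (\<lambda>n. \<not> P n) U"
    and U_free: "U \<le> sequentially"
    and KM: "kripke_model W R e"
    and Wp_def: "Wp = {f. \<forall>n. f n \<in> W}"
    and Rp_def: "Rp = {(f,g). f \<in> Wp \<and> g \<in> Wp \<and> eventually (\<lambda>n. (f n, g n) \<in> R) U}"
    and ep_def: "ep = (\<lambda>f p. Lim U (\<lambda>n. e (f n) p))"
begin

lemma ulim_exists:
  fixes x :: "nat \<Rightarrow> real"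
  assumes "\<And>n. 0 \<le> x n \<and> x n \<le> 1"
  shows "\<exists>L. (x \<longlongrightarrow> L) U"
proof -
  define S where "S = {r. eventually (\<lambda>n. r \<le> x n) U}"
  have S0: "0 \<in> S" unfolding S_def using assms by simp
  have Sb: "r \<le> 1" if "r \<in> S" for r
  proof (rule ccontr)
    assume "\<not> r \<le> 1"
    from that have "eventually (\<lambda>n. r \<le> x n) U" by (simp add: S_def)
    then have "eventually (\<lambda>n. False) U"
      by (rule eventually_mono) (metis assms not_le order.trans \<open>\<not> r \<le> 1\<close>)
    then show False using U_nbot by simp
  qed
  have bdd: "bdd_above S" using Sb by (intro bdd_aboveI) auto
  have "(x \<longlongrightarrow> Sup S) U"
  proof (rule order_tendstoI)
    fix a assume "a < Sup S"
    then obtain r where "r \<in> S" "a < r" using less_cSup_iff[of S a] S0 bdd by auto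
    then show "eventually (\<lambda>n. a < x n) U" unfolding S_def by (auto elim: eventually_mono)
  next
    fix a assume "Sup S < a"
    then have "a \<notin> S" using cSup_upper[OF _ bdd] by force
    then have "\<not> eventually (\<lambda>n. a \<le> x n) U" unfolding S_def by simp
    then show "eventually (\<lambda>n. x n < a) U" using U_ultra[of "\<lambda>n. a \<le> x n"] by (simp add: not_le)
  qed
  then show ?thesis by blast
qed

lemma RW: "(w,u) \<in> R \<Longrightarrow> w \<in> W \<and> u \<in> W" using KM unfolding kripke_model_def by auto

lemma evr: "w \<in> W \<Longrightarrow> 0 \<le> ev R e w \<phi> \<and> ev R e w \<phi> \<le> 1" using ev_range[OF KM] .

lemma inv_tends: "((\<lambda>n::nat. 1 / (real n + 1)) \<longlongrightarrow> 0) U"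
proof -
  have "((\<lambda>n::nat. inverse (real (Suc n))) \<longlongrightarrow> 0) sequentially" by (rule LIMSEQ_inverse_real_of_nat)
  then have "((\<lambda>n::nat. 1 / (real n + 1)) \<longlongrightarrow> 0) sequentially" by (simp add: inverse_eq_divide add.commute)
  then show ?thesis using tendsto_mono[OF U_free] by blast
qed


lemma seqW: "f \<in> Wp \<Longrightarrow> f n \<in> W" using Wp_def by auto

lemma box_step:
  assumes IH: "\<And>g. g \<in> Wp \<Longrightarrow> ((\<lambda>n. ev R e (g n) \<phi>) \<longlongrightarrow> ev Rp ep g \<phi>) U"
    and f: "f \<in> Wp"
  shows "((\<lambda>n. ev R e (f n) (Box \<phi>)) \<longlongrightarrow> ev Rp ep f (Box \<phi>)) U \<and>
    ({g. (f, g) \<in> Rp} \<noteq> {} \<longrightarrow> (\<exists>g. (f, g) \<in> Rp \<and> ev Rp ep f (Box \<phi>) = ev Rp ep g \<phi>))"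
proof -
  define S where "S n = {u. (f n, u) \<in> R}" for n
  define m where "m n = ev R e (f n) (Box \<phi>)" for n
  show ?thesis
  proof (cases "eventually (\<lambda>n. S n = {}) U")
    case True
    have emp: "{g. (f, g) \<in> Rp} = {}"
    proof (rule ccontr)
      assume "{g. (f, g) \<in> Rp} \<noteq> {}"
      then obtain g where "(f, g) \<in> Rp" by auto
      then have "eventually (\<lambda>n. (f n, g n) \<in> R) U" unfolding Rp_def by auto
      with True have "eventually (\<lambda>n. False) U" unfolding S_def
        by (auto elim: eventually_elim2)
      then show False using U_nbot by simp
    qed
    have "eventually (\<lambda>n. ev R e (f n) (Box \<phi>) = 1) U"
      using True by (rule eventually_mono) (simp add: S_def)
    then have "((\<lambda>n. ev R e (f n) (Box \<phi>)) \<longlongrightarrow> 1) U" by (rule tendsto_eventually)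
    then show ?thesis using emp by simp
  next
    case False
    then have ne: "eventually (\<lambda>n. S n \<noteq> {}) U" using U_ultra[of "\<lambda>n. S n = {}"] by simp
    have bb: "bdd_below ((\<lambda>u. ev R e u \<phi>) ` S n)" for n
      using evr RW unfolding S_def by (intro bdd_belowI[of _ 0]) auto
    have mS: "S n \<noteq> {} \<Longrightarrow> m n = (INF u\<in>S n. ev R e u \<phi>)" for n
      unfolding m_def S_def by (simp only: ev.simps if_False)
    have exu: "\<exists>u. u \<in> S n \<and> ev R e u \<phi> < m n + 1 / (real n + 1)" if "S n \<noteq> {}" for n
    proof -
      have "(INF u\<in>S n. ev R e u \<phi>) < m n + 1 / (real n + 1)" using mS[OF that]
        by (simp add: add_pos_pos)
      then show ?thesis using cINF_less_iff[OF that bb] by auto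
    qed
    define g where "g n = (if S n \<noteq> {} then (SOME u. u \<in> S n \<and> ev R e u \<phi> < m n + 1 / (real n + 1)) else f n)" for n
    have gS: "S n \<noteq> {} \<Longrightarrow> g n \<in> S n \<and> ev R e (g n) \<phi> < m n + 1 / (real n + 1)" for n
      unfolding g_def using someI_ex[OF exu] by auto
    have gW: "g \<in> Wp" unfolding Wp_def
    proof (safe)
      fix n show "g n \<in> W"
        using gS[of n] RW seqW[OF f] unfolding S_def g_def by (cases "S n = {}") auto
    qed
    have "eventually (\<lambda>n. (f n, g n) \<in> R) U"
      using ne by (rule eventually_mono) (use gS S_def in blast)
    then have fg: "(f, g) \<in> Rp" unfolding Rp_def using f gW by auto
    have lowm: "m n \<le> ev R e u \<phi>" if "(f n, u) \<in> R" for n u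
    proof -
      have "S n \<noteq> {}" "u \<in> S n" using that unfolding S_def by auto
      then show ?thesis using mS cINF_lower[OF bb] by auto
    qed
    define L where "L = ev Rp ep g \<phi>"
    have gL: "((\<lambda>n. ev R e (g n) \<phi>) \<longlongrightarrow> L) U" unfolding L_def by (rule IH[OF gW])
    have mL: "(m \<longlongrightarrow> L) U"
    proof (rule tendsto_sandwich[of "\<lambda>n. ev R e (g n) \<phi> - 1 / (real n + 1)" _ _ "\<lambda>n. ev R e (g n) \<phi>"])
      show "eventually (\<lambda>n. ev R e (g n) \<phi> - 1 / (real n + 1) \<le> m n) U"
        using ne by (rule eventually_mono) (use gS in force)
      show "eventually (\<lambda>n. m n \<le> ev R e (g n) \<phi>) U"
        using ne by (rule eventually_mono) (use gS lowm S_def in force)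
      show "((\<lambda>n. ev R e (g n) \<phi> - 1 / (real n + 1)) \<longlongrightarrow> L) U"
        using tendsto_diff[OF gL inv_tends] by simp
      show "((\<lambda>n. ev R e (g n) \<phi>) \<longlongrightarrow> L) U" by (rule gL)
    qed
    have geL: "L \<le> ev Rp ep g' \<phi>" if "(f, g') \<in> Rp" for g'
    proof -
      have g'W: "g' \<in> Wp" and ev': "eventually (\<lambda>n. (f n, g' n) \<in> R) U" using that unfolding Rp_def by auto
      show ?thesis
      proof (rule tendsto_le[OF U_nbot IH[OF g'W] mL])
        show "eventually (\<lambda>n. m n \<le> ev R e (g' n) \<phi>) U" using ev' by (rule eventually_mono) (rule lowm)
      qed
    qed
    have nes: "{g. (f, g) \<in> Rp} \<noteq> {}" using fg by auto
    have bb': "bdd_below ((\<lambda>g. ev Rp ep g \<phi>) ` {g. (f, g) \<in> Rp})"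
      using geL by (intro bdd_belowI[of _ L]) auto
    have infL: "(INF g\<in>{g. (f, g) \<in> Rp}. ev Rp ep g \<phi>) = L"
    proof (rule antisym)
      show "(INF g\<in>{g. (f, g) \<in> Rp}. ev Rp ep g \<phi>) \<le> L" unfolding L_def
        using cINF_lower[OF bb', of g] fg by simp
      show "L \<le> (INF g\<in>{g. (f, g) \<in> Rp}. ev Rp ep g \<phi>)"
        using nes geL by (intro cINF_greatest) auto
    qed
    have val: "ev Rp ep f (Box \<phi>) = L" using infL by (simp only: ev.simps if_not_P[OF nes])
    show ?thesis using mL fg unfolding val m_def L_def by auto
  qed
qed

lemma dia_step:
  assumes IH: "\<And>g. g \<in> Wp \<Longrightarrow> ((\<lambda>n. ev R e (g n) \<phi>) \<longlongrightarrow> ev Rp ep g \<phi>) U"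
    and f: "f \<in> Wp"
  shows "((\<lambda>n. ev R e (f n) (Dia \<phi>)) \<longlongrightarrow> ev Rp ep f (Dia \<phi>)) U \<and>
    ({g. (f, g) \<in> Rp} \<noteq> {} \<longrightarrow> (\<exists>g. (f, g) \<in> Rp \<and> ev Rp ep f (Dia \<phi>) = ev Rp ep g \<phi>))"
proof -
  define S where "S n = {u. (f n, u) \<in> R}" for n
  define m where "m n = ev R e (f n) (Dia \<phi>)" for n
  show ?thesis
  proof (cases "eventually (\<lambda>n. S n = {}) U")
    case True
    have emp: "{g. (f, g) \<in> Rp} = {}"
    proof (rule ccontr)
      assume "{g. (f, g) \<in> Rp} \<noteq> {}"
      then obtain g where "(f, g) \<in> Rp" by auto
      then have "eventually (\<lambda>n. (f n, g n) \<in> R) U" unfolding Rp_def by auto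
      with True have "eventually (\<lambda>n. False) U" unfolding S_def
        by (auto elim: eventually_elim2)
      then show False using U_nbot by simp
    qed
    have "eventually (\<lambda>n. ev R e (f n) (Dia \<phi>) = 0) U"
      using True by (rule eventually_mono) (simp add: S_def)
    then have "((\<lambda>n. ev R e (f n) (Dia \<phi>)) \<longlongrightarrow> 0) U" by (rule tendsto_eventually)
    then show ?thesis using emp by simp
  next
    case False
    then have ne: "eventually (\<lambda>n. S n \<noteq> {}) U" using U_ultra[of "\<lambda>n. S n = {}"] by simp
    have bb: "bdd_above ((\<lambda>u. ev R e u \<phi>) ` S n)" for n
      using evr RW unfolding S_def by (intro bdd_aboveI[of _ 1]) auto
    have mS: "S n \<noteq> {} \<Longrightarrow> m n = (SUP u\<in>S n. ev R e u \<phi>)" for n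
      unfolding m_def S_def by (simp only: ev.simps if_False)
    have exu: "\<exists>u. u \<in> S n \<and> m n - 1 / (real n + 1) < ev R e u \<phi>" if "S n \<noteq> {}" for n
    proof -
      have "m n - 1 / (real n + 1) < (SUP u\<in>S n. ev R e u \<phi>)" using mS[OF that]
        by (simp add: add_pos_pos)
      then show ?thesis using less_cSUP_iff[OF that bb] by auto
    qed
    define g where "g n = (if S n \<noteq> {} then (SOME u. u \<in> S n \<and> m n - 1 / (real n + 1) < ev R e u \<phi>) else f n)" for n
    have gS: "S n \<noteq> {} \<Longrightarrow> g n \<in> S n \<and> m n - 1 / (real n + 1) < ev R e (g n) \<phi>" for n
      unfolding g_def using someI_ex[OF exu] by auto
    have gW: "g \<in> Wp" unfolding Wp_def
    proof (safe)
      fix n show "g n \<in> W"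
        using gS[of n] RW seqW[OF f] unfolding S_def g_def by (cases "S n = {}") auto
    qed
    have "eventually (\<lambda>n. (f n, g n) \<in> R) U"
      using ne by (rule eventually_mono) (use gS S_def in blast)
    then have fg: "(f, g) \<in> Rp" unfolding Rp_def using f gW by auto
    have lowm: "ev R e u \<phi> \<le> m n" if "(f n, u) \<in> R" for n u
    proof -
      have "S n \<noteq> {}" "u \<in> S n" using that unfolding S_def by auto
      then show ?thesis using mS cSUP_upper[OF _ bb] by auto
    qed
    define L where "L = ev Rp ep g \<phi>"
    have gL: "((\<lambda>n. ev R e (g n) \<phi>) \<longlongrightarrow> L) U" unfolding L_def by (rule IH[OF gW])
    have mL: "(m \<longlongrightarrow> L) U"
    proof (rule tendsto_sandwich[of "\<lambda>n. ev R e (g n) \<phi>" _ _ "\<lambda>n. ev R e (g n) \<phi> + 1 / (real n + 1)"])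
      show "eventually (\<lambda>n. m n \<le> ev R e (g n) \<phi> + 1 / (real n + 1)) U"
        using ne by (rule eventually_mono) (use gS in force)
      show "eventually (\<lambda>n. ev R e (g n) \<phi> \<le> m n) U"
        using ne by (rule eventually_mono) (use gS lowm S_def in force)
      show "((\<lambda>n. ev R e (g n) \<phi> + 1 / (real n + 1)) \<longlongrightarrow> L) U"
        using tendsto_add[OF gL inv_tends] by simp
      show "((\<lambda>n. ev R e (g n) \<phi>) \<longlongrightarrow> L) U" by (rule gL)
    qed
    have geL: "ev Rp ep g' \<phi> \<le> L" if "(f, g') \<in> Rp" for g'
    proof -
      have g'W: "g' \<in> Wp" and ev': "eventually (\<lambda>n. (f n, g' n) \<in> R) U" using that unfolding Rp_def by auto
      show ?thesis
      proof (rule tendsto_le[OF U_nbot mL IH[OF g'W]])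
        show "eventually (\<lambda>n. ev R e (g' n) \<phi> \<le> m n) U" using ev' by (rule eventually_mono) (rule lowm)
      qed
    qed
    have nes: "{g. (f, g) \<in> Rp} \<noteq> {}" using fg by auto
    have bb': "bdd_above ((\<lambda>g. ev Rp ep g \<phi>) ` {g. (f, g) \<in> Rp})"
      using geL by (intro bdd_aboveI[of _ L]) auto
    have infL: "(SUP g\<in>{g. (f, g) \<in> Rp}. ev Rp ep g \<phi>) = L"
    proof (rule antisym)
      show "(SUP g\<in>{g. (f, g) \<in> Rp}. ev Rp ep g \<phi>) \<le> L"
        using nes geL by (intro cSUP_least) auto
      show "L \<le> (SUP g\<in>{g. (f, g) \<in> Rp}. ev Rp ep g \<phi>)" unfolding L_def
        using cSUP_upper[OF _ bb', of g] fg by simp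
    qed
    have val: "ev Rp ep f (Dia \<phi>) = L" using infL by (simp only: ev.simps if_not_P[OF nes])
    show ?thesis using mL fg unfolding val m_def L_def by auto
  qed
qed


lemma los: "f \<in> Wp \<Longrightarrow> ((\<lambda>n. ev R e (f n) \<phi>) \<longlongrightarrow> ev Rp ep f \<phi>) U"
proof (induction \<phi> arbitrary: f)
  case (Var p)
  have "0 \<le> e (f n) p \<and> e (f n) p \<le> 1" for n using KM seqW[OF Var] unfolding kripke_model_def by auto
  from ulim_exists[of "\<lambda>n. e (f n) p", OF this] obtain L where L: "((\<lambda>n. e (f n) p) \<longlongrightarrow> L) U" by blast
  have "ep f p = L" unfolding ep_def using tendsto_Lim[OF _ L] U_nbot by simp
  then show ?case using L by simp
next
  case (Meet a b) then show ?case by (simp add: tendsto_min)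
next
  case (Join a b) then show ?case by (simp add: tendsto_max)
next
  case (Prod a b) then show ?case by (simp add: tendsto_max tendsto_add tendsto_diff)
next
  case (Imp a b) then show ?case by (simp add: tendsto_min tendsto_add tendsto_diff)
next
  case (Box a) then show ?case using box_step by blast
next
  case (Dia a) then show ?case using dia_step by blast
qed auto

lemma model: "kripke_model Wp Rp ep"
proof -
  obtain w where w: "w \<in> W" using KM unfolding kripke_model_def by auto
  have "(\<lambda>n. w) \<in> Wp" using w Wp_def by auto
  moreover have "Rp \<subseteq> Wp \<times> Wp" using Rp_def by auto
  moreover have "0 \<le> ep f p \<and> ep f p \<le> 1" if "f \<in> Wp" for f p
  proof -
    have L: "((\<lambda>n. e (f n) p) \<longlongrightarrow> ep f p) U" using los[OF that, of "Var p"] by simp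
    have b: "\<And>n. 0 \<le> e (f n) p \<and> e (f n) p \<le> 1" using KM seqW[OF that] unfolding kripke_model_def by auto
    show ?thesis
      using tendsto_lowerbound[OF L _ U_nbot, of 0] tendsto_upperbound[OF L _ U_nbot, of 1] b by auto
  qed
  ultimately show ?thesis unfolding kripke_model_def by blast
qed

lemma witn: "witnessed Wp Rp ep"
  unfolding witnessed_def using box_step[OF los] dia_step[OF los] by blast

lemma embed: "v \<in> W \<Longrightarrow> (\<lambda>n. v) \<in> Wp \<and> ev R e v \<phi> = ev Rp ep (\<lambda>n. v) \<phi>"
proof -
  assume v: "v \<in> W"
  then have "(\<lambda>n. v) \<in> Wp" using Wp_def by auto
  moreover from los[OF this, of \<phi>] have "ev Rp ep (\<lambda>n. v) \<phi> = ev R e v \<phi>"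
    using tendsto_unique[OF U_nbot _ tendsto_const] by auto
  ultimately show ?thesis by simp
qed

end

theorem mainTheorem3:
  fixes W :: "'w set" and R :: "('w \<times> 'w) set" and e :: "'w \<Rightarrow> 'v \<Rightarrow> real"
  assumes "kripke_model W R e"
  shows "\<exists>(W' :: (nat \<Rightarrow> 'w) set) R' (e' :: (nat \<Rightarrow> 'w) \<Rightarrow> 'v \<Rightarrow> real) h.
           kripke_model W' R' e' \<and> witnessed W' R' e' \<and> (\<forall>v\<in>W. h v \<in> W') \<and>
           (\<forall>v\<in>W. \<forall>\<phi>. ev R e v \<phi> = ev R' e' (h v) \<phi>)"
proof -
  obtain U :: "nat filter" where U: "U \<noteq> bot" "\<forall>P. eventually P U \<or> eventually (\<lambda>n. \<not> P n) U" "U \<le> sequentially"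
    using ex_free_ultra by blast
  define Wp :: "(nat \<Rightarrow> 'w) set" where "Wp = {f. \<forall>n. f n \<in> W}"
  define Rp where "Rp = {(f,g). f \<in> Wp \<and> g \<in> Wp \<and> eventually (\<lambda>n. (f n, g n) \<in> R) U}"
  define ep :: "(nat \<Rightarrow> 'w) \<Rightarrow> 'v \<Rightarrow> real" where "ep = (\<lambda>f p. Lim U (\<lambda>n. e (f n) p))"
  interpret ultra_setup U W R e Wp Rp ep
    using U assms by unfold_locales (auto simp: Wp_def Rp_def ep_def)
  show ?thesis
    apply (rule exI[of _ Wp], rule exI[of _ Rp], rule exI[of _ ep], rule exI[of _ "\<lambda>v n. v"])
    using model witn embed by blast
qed

end
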